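(* Let $V:\mathbb{R}^2\to[0,\infty)$ be Hölder continuous with compact support and $\int V=1$, and let $\tau>0$. For $\varepsilon\in(0,1)$ set $V^\varepsilon(x)=\varepsilon^{-2}V(x/\varepsilon)$ and $V_\varepsilon(x)=\varepsilon^{-2}|\log\varepsilon|^{-1}V(x/\varepsilon)$. For all sufficiently small $\varepsilon$ let $u^\varepsilon\in C^2(\mathbb{R}^2)$ be the unique function with $u^\varepsilon(x)=O(|\log|x||)$ as $|x|\to\infty$ satisfying $$u^\varepsilon(x)=\frac{\tau}{2\pi}\int_{\mathbb{R}^2}\log|x-y|\big[V_\varepsilon(y)u^\varepsilon(y)+V^\varepsilon(y)\big]dy.$$ Then for every $k>0$, $$\lim_{\varepsilon\to0}\sup_{|x|\le k}\left|u^\varepsilon(\varepsilon x)|\log\varepsilon|^{-1}+\frac{\tau}{2\pi+\tau}\right|=0.$$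
   Context: Existence and uniqueness of $u^\varepsilon$ for small $\varepsilon$ (in the class of $C^2$ functions with logarithmic growth) is part of the setting and is taken as given. *)

theory Defs
  imports "HOL-Analysis.Analysis"
begin

definition holder_continuous :: "(real^2 \<Rightarrow> real) \<Rightarrow> bool" where
  "holder_continuous f \<longleftrightarrow>
     (\<exists>\<alpha> C. 0 < \<alpha> \<and> \<alpha> \<le> 1 \<and> (\<forall>x y. \<bar>f x - f y\<bar> \<le> C * dist x y powr \<alpha>))"

definition has_compact_support :: "(real^2 \<Rightarrow> real) \<Rightarrow> bool" where
  "has_compact_support f \<longleftrightarrow> compact (closure {x. f x \<noteq> 0})"

definition C2_plane :: "(real^2 \<Rightarrow> real) \<Rightarrow> bool" where
  "C2_plane f \<longleftrightarrow>
     (\<exists>(f1 :: real^2 \<Rightarrow> ((real^2) \<Rightarrow>\<^sub>L real)) (f2 :: real^2 \<Rightarrow> ((real^2) \<Rightarrow>\<^sub>L ((real^2) \<Rightarrow>\<^sub>L real))).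
        (\<forall>x. (f has_derivative blinfun_apply (f1 x)) (at x)) \<and>
        (\<forall>x. (f1 has_derivative blinfun_apply (f2 x)) (at x)) \<and>
        continuous_on UNIV f2)"

definition log_growth :: "(real^2 \<Rightarrow> real) \<Rightarrow> bool" where
  "log_growth f \<longleftrightarrow> (\<exists>C R. \<forall>x. norm x \<ge> R \<longrightarrow> \<bar>f x\<bar> \<le> C * \<bar>ln (norm x)\<bar>)"

end

theory Submission
  imports Defs
begin


definition stairA :: "real^2 \<Rightarrow> nat \<Rightarrow> (real^2) set" where
  "stairA x n = ball x ((1/2)^n) - {x}"

definition stair :: "real^2 \<Rightarrow> real^2 \<Rightarrow> real" where
  "stair x z = ln 2 * (\<Sum>n. indicator (stairA x n) z)"

lemma stair_sums:
  "(\<lambda>n. indicator (stairA x n) z :: real) sums (\<Sum>n<N. indicator (stairA x n) z)"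
  if "(1/2)^N < dist x z" for N
proof (rule sums_finite)
  show "finite {..<N}" by simp
  show "\<And>n. n \<notin> {..<N} \<Longrightarrow> (indicator (stairA x n) z :: real) = 0"
  proof -
    fix n assume "n \<notin> {..<N}"
    then have "((1::real)/2)^n \<le> (1/2)^N" by (simp add: power_decreasing)
    then have "\<not> dist x z < (1/2)^n" using that by linarith
    then show "(indicator (stairA x n) z :: real) = 0"
      by (auto simp: stairA_def indicator_def)
  qed
qed

lemma stair_exN: "\<exists>N. ((1::real)/2)^N < dist x z" if "z \<noteq> x"
  using real_arch_pow_inv[of "dist x z" "1/2"] that by auto

lemma stair_summable: "summable (\<lambda>n. indicator (stairA x n) z :: real)"
proof (cases "z = x")
  case True then show ?thesis by (simp add: stairA_def)
next
  case False then obtain N where "((1::real)/2)^N < dist x z" using stair_exN by blast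
  then show ?thesis using stair_sums sums_summable by blast
qed

lemma stair_nonneg: "stair x z \<ge> 0"
  unfolding stair_def using stair_summable
  by (intro mult_nonneg_nonneg suminf_nonneg) auto

lemma stairA_meas: "stairA x n \<in> lmeasurable"
  unfolding stairA_def by (intro fmeasurable_Diff) auto

lemma stairA_measure: "measure lebesgue (stairA x n) = (1/4)^n * measure lebesgue (ball (0::real^2) 1)"
proof -
  have "measure lebesgue (stairA x n) = measure lebesgue (ball x ((1/2)^n))"
    unfolding stairA_def by (rule measure_Diff_null_set) auto
  also have "\<dots> = measure lborel (ball x ((1/2)^n))" by simp
  also have "\<dots> = ((1/2)^n)^2 * measure lebesgue (ball (0::real^2) 1)"
    by (subst content_ball_conv_unit_ball) auto
  finally show ?thesis by (simp add: power_mult_distrib power_mult[symmetric] mult.commute power_divide)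
    (metis power_mult power2_eq_square num_double numeral_times_numeral mult.commute)
qed

definition Uball :: real where "Uball = measure lebesgue (ball (0::real^2) 1)"

lemma Uball_nonneg: "Uball \<ge> 0" unfolding Uball_def by simp

lemma geo_quarter: "(\<Sum>n<k. (1/4::real)^n) \<le> 4/3"
proof -
  have "(\<Sum>n<k. (1/4::real)^n) \<le> (\<Sum>n. (1/4::real)^n)"
    by (intro sum_le_suminf) (auto intro: summable_geometric)
  also have "\<dots> = 4/3" by (subst suminf_geometric) auto
  finally show ?thesis .
qed

lemma stair_partial_int:
  "((\<lambda>z. ln 2 * (\<Sum>n<k. indicator (stairA x n) z)) has_integral
     (ln 2 * Uball * (\<Sum>n<k. (1/4)^n))) UNIV"
proof -
  have "((\<lambda>z. (\<Sum>n<k. indicator (stairA x n) z)) has_integral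
     (\<Sum>n<k. measure lebesgue (stairA x n))) UNIV"
    by (intro has_integral_sum) (auto simp: lmeasurable_iff_has_integral[symmetric] stairA_meas)
  then have "((\<lambda>z. ln 2 * (\<Sum>n<k. indicator (stairA x n) z)) has_integral
     (ln 2 * (\<Sum>n<k. measure lebesgue (stairA x n)))) UNIV"
    by (rule has_integral_mult_right)
  moreover have "(\<Sum>n<k. measure lebesgue (stairA x n)) = (\<Sum>n<k. (1/4::real)^n) * Uball"
    by (simp add: stairA_measure Uball_def sum_distrib_right)
  ultimately show ?thesis by (simp add: mult_ac)
qed

lemma stair_int: "stair x integrable_on UNIV \<and> integral UNIV (stair x) \<le> ln 2 * Uball * 4/3"
proof -
  let ?f = "\<lambda>k z. ln (2::real) * (\<Sum>n<k. indicator (stairA x n) z)"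
  have int: "\<And>k. integral UNIV (?f k) = ln 2 * Uball * (\<Sum>n<k. (1/4)^n)"
    using stair_partial_int by (metis integral_unique)
  have bnd: "\<And>k. integral UNIV (?f k) \<le> ln 2 * Uball * 4/3"
  proof -
    fix k
    have c: "ln 2 * Uball \<ge> 0" using Uball_nonneg by simp
    have "ln 2 * Uball * (\<Sum>n<k. (1/4::real)^n) \<le> ln 2 * Uball * (4/3)"
      using mult_left_mono[OF geo_quarter[of k] c] .
    then show "integral UNIV (?f k) \<le> ln 2 * Uball * 4/3" unfolding int by simp
  qed
  have bnd0: "\<And>k. integral UNIV (?f k) \<ge> 0"
    unfolding int using Uball_nonneg by (intro mult_nonneg_nonneg sum_nonneg) simp_all
  have mc: "stair x integrable_on UNIV \<and> ((\<lambda>k. integral UNIV (?f k)) \<longlonglongrightarrow> integral UNIV (stair x))"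
  proof (rule monotone_convergence_increasing)
    show "\<And>k. ?f k integrable_on UNIV" using stair_partial_int by blast
    show "\<And>k z. z \<in> UNIV \<Longrightarrow> ?f k z \<le> ?f (Suc k) z"
      by (simp add: distrib_left)
    show "\<And>z. z \<in> UNIV \<Longrightarrow> (\<lambda>k. ?f k z) \<longlonglongrightarrow> stair x z"
      unfolding stair_def by (intro tendsto_mult_left summable_LIMSEQ stair_summable)
    show "bounded (range (\<lambda>k. integral UNIV (?f k)))"
    proof -
      have "\<forall>k. \<bar>integral UNIV (?f k)\<bar> \<le> ln 2 * Uball * 4/3"
        using bnd bnd0 by (simp add: abs_le_iff)
      then show ?thesis unfolding bounded_iff real_norm_def by blast
    qed
  qed
  then have "integral UNIV (stair x) \<le> ln 2 * Uball * 4/3"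
    using Lim_bounded[of "\<lambda>k. integral UNIV (?f k)" "integral UNIV (stair x)" 0 "ln 2 * Uball * 4/3"] bnd
    by simp
  with mc show ?thesis by simp
qed

lemma stair_bound:
  assumes "0 < dist x z" "dist x z < 1"
  shows "- ln (dist x z) \<le> stair x z"
proof -
  define d where "d = dist x z"
  define k where "k = nat \<lceil>- ln d / ln 2\<rceil>"
  have d: "0 < d" "d < 1" using assms d_def by auto
  have "- ln d / ln 2 \<le> real k" unfolding k_def by linarith
  moreover have "- ln d = (- ln d / ln 2) * ln 2" by simp
  ultimately have 1: "- ln d \<le> ln 2 * real k"
    by (metis mult.commute mult_right_mono ln_ge_zero one_le_numeral)
  have "\<And>n. n < k \<Longrightarrow> d < (1/2)^n"
  proof -
    fix n assume "n < k"
    then have "real n < - ln d / ln 2" unfolding k_def by linarith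
    then have "real n * ln 2 < (- ln d / ln 2) * ln 2"
      by (intro mult_strict_right_mono) auto
    then have "ln 2 * real n < - ln d" by (simp add: mult.commute)
    then have "ln d < - (real n * ln 2)" by (simp add: mult.commute)
    also have "- (real n * ln 2) = ln ((1/2)^n)" by (simp add: ln_realpow ln_div)
    finally show "d < (1/2)^n" using d by (subst ln_less_cancel_iff[symmetric]) auto
  qed
  then have 2: "(\<Sum>n<k. indicator (stairA x n) z) = (\<Sum>n<k. 1::real)"
  proof (intro sum.cong refl)
    fix n assume "n \<in> {..<k}"
    then have "d < (1/2)^n" using \<open>\<And>n. n < k \<Longrightarrow> d < (1/2)^n\<close> by blast
    then have "z \<in> stairA x n" using d unfolding stairA_def d_def by auto
    then show "indicator (stairA x n) z = (1::real)" by simp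
  qed
  have "(\<Sum>n<k. indicator (stairA x n) z) \<le> (\<Sum>n. indicator (stairA x n) z :: real)"
    by (intro sum_le_suminf stair_summable) auto
  then have "ln 2 * real k \<le> stair x z" unfolding stair_def using 2
    by (intro mult_left_mono) auto
  with 1 show ?thesis unfolding d_def by linarith
qed



lemma cball_sub_cbox: "cball (0::real^2) R \<subseteq> cbox (-R *\<^sub>R One) (R *\<^sub>R One)"
proof
  fix x :: "real^2" assume "x \<in> cball 0 R"
  then have n: "norm x \<le> R" by simp
  have "-R \<le> x $ i \<and> x $ i \<le> R" for i
  proof -
    have "\<bar>x $ i\<bar> \<le> R" using component_le_norm_cart[of x i] n by linarith
    then show ?thesis by linarith
  qed
  then show "x \<in> cbox (-R *\<^sub>R One) (R *\<^sub>R One)"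
    by (auto simp: mem_box_cart Cart_1[symmetric])
qed

lemma scale_mem_cbox:
  fixes y :: "real^2"
  assumes "e > 0"
  shows "y \<in> cbox (-(e*R) *\<^sub>R One) ((e*R) *\<^sub>R One) \<longleftrightarrow> y /\<^sub>R e \<in> cbox (-R *\<^sub>R One) (R *\<^sub>R One)"
proof -
  have "\<And>i. (-(e*R) \<le> y $ i \<and> y $ i \<le> e*R) \<longleftrightarrow> (-R \<le> y $ i / e \<and> y $ i / e \<le> R)"
    using assms by (auto simp: field_simps)
  then show ?thesis by (auto simp: mem_box_cart Cart_1[symmetric] divide_inverse mult.commute)
qed

lemma scale_integral:
  fixes F :: "real^2 \<Rightarrow> real"
  assumes e: "e > 0" and Fint: "F integrable_on UNIV"
    and Fz: "\<And>y. y \<notin> cbox (-(e*R) *\<^sub>R One) ((e*R) *\<^sub>R One) \<Longrightarrow> F y = 0"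
  shows "((\<lambda>z. F (e *\<^sub>R z)) has_integral (integral UNIV F / e^2)) UNIV"
proof -
  define a :: "real^2" where "a = (-(e*R)) *\<^sub>R One"
  define b :: "real^2" where "b = (e*R) *\<^sub>R One"
  have "F integrable_on cbox a b" by (rule integrable_on_subcbox[OF Fint]) simp
  then have h1: "(F has_integral integral (cbox a b) F) (cbox a b)" by (rule integrable_integral)
  have "(F has_integral integral (cbox a b) F) UNIV"
  proof (rule has_integral_on_superset[OF h1])
    show "\<And>x. x \<notin> cbox a b \<Longrightarrow> F x = 0" using Fz unfolding a_def b_def by blast
  qed simp
  then have I: "integral UNIV F = integral (cbox a b) F" by (rule integral_unique)
  have "((\<lambda>z. F (e *\<^sub>R z + 0)) has_integral (integral (cbox a b) F /\<^sub>R e ^ DIM(real^2)))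
           (cbox ((a - 0) /\<^sub>R e) ((b - 0) /\<^sub>R e))"
    by (rule has_integral_affinity'[OF h1 e])
  then have h2: "((\<lambda>z. F (e *\<^sub>R z)) has_integral (integral UNIV F / e^2))
           (cbox (a /\<^sub>R e) (b /\<^sub>R e))" using I by (simp add: divide_inverse mult.commute)
  show ?thesis
  proof (rule has_integral_on_superset[OF h2])
    fix z assume "z \<notin> cbox (a /\<^sub>R e) (b /\<^sub>R e)"
    moreover have "a /\<^sub>R e = -R *\<^sub>R One" "b /\<^sub>R e = R *\<^sub>R One" using e by (auto simp: a_def b_def)
    ultimately have "z \<notin> cbox (-R *\<^sub>R One) (R *\<^sub>R One)" by simp
    then have "e *\<^sub>R z \<notin> cbox (-(e*R) *\<^sub>R One) ((e*R) *\<^sub>R One)"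
      using scale_mem_cbox[OF e, of "e *\<^sub>R z" R] e by simp
    then show "F (e *\<^sub>R z) = 0" by (rule Fz)
  qed auto
qed



lemma ln_abs_bound:
  fixes x z :: "real^2"
  assumes "norm x \<le> K" "norm z \<le> R"
  shows "\<bar>ln (norm (x - z))\<bar> \<le> (K + R) + stair x z"
proof -
  define d where "d = norm (x - z)"
  have dd: "d = dist x z" unfolding d_def by (simp add: dist_norm)
  have dK: "d \<le> K + R" unfolding d_def using norm_triangle_ineq4[of x z] assms by linarith
  have st: "stair x z \<ge> 0" by (rule stair_nonneg)
  consider "d = 0" | "d \<ge> 1" | "0 < d \<and> d < 1" using d_def by force
  then show ?thesis
  proof cases
    case 1 then show ?thesis using st dK unfolding d_def by simp
  next
    case 2
    then have "0 \<le> ln d" "ln d \<le> d - 1" using ln_le_minus_one[of d] by auto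
    then show ?thesis using st dK unfolding d_def by linarith
  next
    case 3
    then have "ln d < 0" by simp
    moreover have "- ln d \<le> stair x z" using stair_bound[of x z] 3 dd by simp
    moreover have "K + R \<ge> 0" using assms norm_ge_zero[of x] norm_ge_zero[of z] by linarith
    ultimately show ?thesis unfolding d_def by linarith
  qed
qed

definition C0 :: "real \<Rightarrow> real \<Rightarrow> real" where
  "C0 K R = (K + R) * measure lebesgue (cball (0::real^2) R) + ln 2 * Uball * 4/3"

lemma bound_log_int:
  fixes h :: "real^2 \<Rightarrow> real" and x :: "real^2"
  assumes x: "norm x \<le> K" and H: "H \<ge> 0"
    and hz: "\<And>z. z \<notin> cball 0 R \<Longrightarrow> h z = 0"
    and hb: "\<And>z. z \<in> cball 0 R \<Longrightarrow> \<bar>h z\<bar> \<le> H"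
    and hint: "(\<lambda>z. ln (norm (x - z)) * h z) integrable_on UNIV"
  shows "\<bar>integral UNIV (\<lambda>z. ln (norm (x - z)) * h z)\<bar> \<le> H * C0 K R"
proof -
  define b where "b z = H * ((K + R) * indicator (cball 0 R) z + stair x z)" for z
  have ind: "(indicator (cball (0::real^2) R) has_integral measure lebesgue (cball (0::real^2) R)) UNIV"
    using lmeasurable_iff_has_integral lmeasurable_cball by blast
  have st: "(stair x has_integral integral UNIV (stair x)) UNIV"
    using stair_int[of x] by blast
  have "((\<lambda>z. (K + R) * indicator (cball 0 R) z + stair x z) has_integral
        ((K + R) * measure lebesgue (cball (0::real^2) R) + integral UNIV (stair x))) UNIV"
    by (intro has_integral_add has_integral_mult_right ind st)
  then have bint: "(b has_integral H * ((K + R) * measure lebesgue (cball (0::real^2) R) + integral UNIV (stair x))) UNIV"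
    unfolding b_def by (rule has_integral_mult_right)
  have "integral UNIV b \<le> H * C0 K R"
    using integral_unique[OF bint] stair_int[of x] H unfolding C0_def
    by (simp add: mult_left_mono)
  moreover have "norm (integral UNIV (\<lambda>z. ln (norm (x - z)) * h z)) \<le> integral UNIV b"
  proof (rule integral_norm_bound_integral[OF hint])
    show "b integrable_on UNIV" using bint by blast
    fix z :: "real^2"
    show "norm (ln (norm (x - z)) * h z) \<le> b z"
    proof (cases "z \<in> cball 0 R")
      case False
      have "0 \<le> b z" unfolding b_def using H stair_nonneg[of x z] False by simp
      then show ?thesis using hz[OF False] by simp
    next
      case True
      then have zR: "norm z \<le> R" by simp
      have nn: "0 \<le> (K + R) + stair x z"
        using norm_ge_zero[of x] norm_ge_zero[of z] x zR stair_nonneg[of x z] by linarith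
      have "\<bar>ln (norm (x - z))\<bar> * \<bar>h z\<bar> \<le> ((K + R) + stair x z) * H"
        by (rule mult_mono[OF ln_abs_bound[OF x zR] hb[OF True] nn abs_ge_zero])
      moreover have "b z = H * ((K + R) + stair x z)" unfolding b_def using True by simp
      ultimately show ?thesis by (simp add: abs_mult mult.commute)
    qed
  qed
  ultimately show ?thesis by simp
qed



lemma per_x:
  fixes V w :: "real^2 \<Rightarrow> real" and x :: "real^2"
  assumes e: "0 < e" "e < 1"
   and VR: "\<And>z. z \<notin> cball 0 R \<Longrightarrow> V z = 0"
   and hint: "(\<lambda>z. V z * (w (e *\<^sub>R z) / (- ln e) + 1)) integrable_on UNIV"
   and Fint: "(\<lambda>y. ln (norm (e *\<^sub>R x - y)) * ((e powr (-2) * \<bar>ln e\<bar> powr (-1) * V (y /\<^sub>R e)) * w y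
                 + e powr (-2) * V (y /\<^sub>R e))) integrable_on UNIV"
   and weq: "w (e *\<^sub>R x) = T * integral UNIV (\<lambda>y. ln (norm (e *\<^sub>R x - y)) *
                 ((e powr (-2) * \<bar>ln e\<bar> powr (-1) * V (y /\<^sub>R e)) * w y + e powr (-2) * V (y /\<^sub>R e)))"
  shows "(\<lambda>z. ln (norm (x - z)) * (V z * (w (e *\<^sub>R z) / (- ln e) + 1))) integrable_on UNIV \<and>
     w (e *\<^sub>R x) / (- ln e) = - T * integral UNIV (\<lambda>z. V z * (w (e *\<^sub>R z) / (- ln e) + 1))
        + T * integral UNIV (\<lambda>z. ln (norm (x - z)) * (V z * (w (e *\<^sub>R z) / (- ln e) + 1))) / (- ln e)"
proof -
  define L where "L = - ln e"
  have L: "L > 0" unfolding L_def using e by simp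
  have absL: "\<bar>ln e\<bar> powr (-1) = 1 / L" unfolding L_def using e by simp
  have e2: "e powr (-2) = 1 / e^2" using e by (simp add: powr_minus_divide)
  define h where "h z = V z * (w (e *\<^sub>R z) / L + 1)" for z
  define F where "F y = ln (norm (e *\<^sub>R x - y)) * ((e powr (-2) * \<bar>ln e\<bar> powr (-1) * V (y /\<^sub>R e)) * w y
                 + e powr (-2) * V (y /\<^sub>R e))" for y
  have Fint': "F integrable_on UNIV" using Fint unfolding F_def .
  have Fz: "F y = 0" if "y \<notin> cbox (-(e*R) *\<^sub>R One) ((e*R) *\<^sub>R One)" for y
  proof -
    have "y /\<^sub>R e \<notin> cbox (-R *\<^sub>R One) (R *\<^sub>R One)" using that scale_mem_cbox[OF e(1)] by blast
    then have "y /\<^sub>R e \<notin> cball 0 R" using cball_sub_cbox by blast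
    then have "V (y /\<^sub>R e) = 0" by (rule VR)
    then show ?thesis unfolding F_def by simp
  qed
  have sc: "((\<lambda>z. F (e *\<^sub>R z)) has_integral (integral UNIV F / e^2)) UNIV"
    by (rule scale_integral[OF e(1) Fint' Fz])
  define G where "G z = ln (norm (e *\<^sub>R x - e *\<^sub>R z)) * h z" for z
  have FG: "F (e *\<^sub>R z) = G z / e^2" for z
  proof -
    have "(e *\<^sub>R z) /\<^sub>R e = z" using e by simp
    then show ?thesis unfolding F_def G_def h_def absL e2 using e L
      by (simp add: field_simps)
  qed
  have "((\<lambda>z. e^2 * (G z / e^2)) has_integral (e^2 * (integral UNIV F / e^2))) UNIV"
    using has_integral_mult_right[OF sc, of "e^2"] unfolding FG .
  then have Gi: "(G has_integral integral UNIV F) UNIV" using e by simp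
  define G' where "G' z = (ln e + ln (norm (x - z))) * h z" for z
  have G'i: "(G' has_integral integral UNIV F) UNIV"
  proof (rule has_integral_spike[OF negligible_sing _ Gi])
    fix z assume "z \<in> UNIV - {x}"
    then have nz: "norm (x - z) > 0" by simp
    have "e *\<^sub>R x - e *\<^sub>R z = e *\<^sub>R (x - z)" by (simp add: algebra_simps)
    then have "norm (e *\<^sub>R x - e *\<^sub>R z) = e * norm (x - z)" using e by simp
    then have "ln (norm (e *\<^sub>R x - e *\<^sub>R z)) = ln e + ln (norm (x - z))"
      using e nz by (simp add: ln_mult)
    then show "G' z = G z" unfolding G_def G'_def by simp
  qed
  have hint': "(h has_integral integral UNIV h) UNIV" using hint unfolding h_def L_def by blast
  have Ei: "((\<lambda>z. G' z - ln e * h z) has_integral (integral UNIV F - ln e * integral UNIV h)) UNIV"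
    by (intro has_integral_diff G'i has_integral_mult_right hint')
  have Eeq: "(\<lambda>z. G' z - ln e * h z) = (\<lambda>z. ln (norm (x - z)) * h z)"
    unfolding G'_def by (auto simp: algebra_simps)
  have Ei': "((\<lambda>z. ln (norm (x - z)) * h z) has_integral (integral UNIV F + L * integral UNIV h)) UNIV"
    using Ei unfolding Eeq L_def by simp
  have "w (e *\<^sub>R x) / L = - T * integral UNIV h + T * integral UNIV (\<lambda>z. ln (norm (x - z)) * h z) / L"
    unfolding integral_unique[OF Ei'] weq F_def[symmetric] using L
    by (simp add: field_simps)
  then show ?thesis using Ei' unfolding h_def L_def by blast
qed



lemma cont_supp_int:
  fixes f :: "real^2 \<Rightarrow> real"
  assumes "continuous_on UNIV f" "\<And>z. z \<notin> cball 0 R \<Longrightarrow> f z = 0"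
  shows "f integrable_on UNIV"
proof -
  have "f integrable_on cbox (-R *\<^sub>R One) (R *\<^sub>R One)"
    by (rule integrable_continuous) (rule continuous_on_subset[OF assms(1)], simp)
  then show ?thesis
  proof (rule integrable_on_superset)
    show "\<And>x. x \<notin> cbox (-R *\<^sub>R One) (R *\<^sub>R One) \<Longrightarrow> f x = 0"
      using assms(2) cball_sub_cbox by blast
  qed simp
qed

lemma C0_nonneg: "0 \<le> K \<Longrightarrow> 0 \<le> R \<Longrightarrow> 0 \<le> C0 K R"
  unfolding C0_def using Uball_nonneg by simp

lemma per_eps:
  fixes V w :: "real^2 \<Rightarrow> real" and e \<tau> R Vm K :: real
  assumes e: "0 < e" "e < 1"
   and tau: "\<tau> > 0"
   and Vc: "continuous_on UNIV V" and Vnn: "\<And>x. V x \<ge> 0"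
   and VR: "\<And>z. z \<notin> cball 0 R \<Longrightarrow> V z = 0" and R: "R \<ge> 0"
   and Vm: "\<And>z. V z \<le> Vm"
   and V1: "integral UNIV V = 1"
   and wc: "continuous_on UNIV w"
   and eq: "\<forall>x. (\<lambda>y. ln (norm (x - y)) *
               ((e powr (-2) * \<bar>ln e\<bar> powr (-1) * V (y /\<^sub>R e)) * w y
                 + e powr (-2) * V (y /\<^sub>R e))) integrable_on UNIV \<and>
             w x = \<tau> / (2 * pi) *
               integral UNIV (\<lambda>y. ln (norm (x - y)) *
                 ((e powr (-2) * \<bar>ln e\<bar> powr (-1) * V (y /\<^sub>R e)) * w y
                   + e powr (-2) * V (y /\<^sub>R e)))"
   and K: "R \<le> K"
   and Lbig: "- ln e \<ge> 4 * (\<tau> / (2 * pi) * Vm * C0 K R) + 1"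
  shows "\<forall>x\<in>cball 0 K. \<bar>w (e *\<^sub>R x) * \<bar>ln e\<bar> powr (-1) + \<tau> / (2 * pi + \<tau>)\<bar>
            \<le> 4 * (\<tau> / (2 * pi) * Vm * C0 K R) * (\<tau> / (2 * pi) + 1) / (- ln e)"
proof -
  define L where "L = - ln e"
  have L: "L > 0" unfolding L_def using e by simp
  have absL: "\<bar>ln e\<bar> powr (-1) = 1 / L" unfolding L_def using e by simp
  define t where "t = \<tau> / (2 * pi)"
  have t: "t > 0" unfolding t_def using tau by simp
  have tt: "\<tau> / (2 * pi + \<tau>) = t / (1 + t)" unfolding t_def using tau by (simp add: field_simps)
  define \<beta> where "\<beta> = t * Vm * C0 K R"
  have Vm0: "Vm \<ge> 0" using Vm[of 0] Vnn[of 0] by linarith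
  have K0: "K \<ge> 0" using R K by linarith
  have \<beta>0: "\<beta> \<ge> 0" unfolding \<beta>_def using t Vm0 C0_nonneg[OF K0 R] by simp
  have LB: "L \<ge> 4 * \<beta> + 1" using Lbig unfolding L_def \<beta>_def t_def .
  define \<phi> where "\<phi> z = w (e *\<^sub>R z) / L" for z
  have \<phi>c: "continuous_on UNIV \<phi>" unfolding \<phi>_def
    using L by (intro continuous_intros continuous_on_compose2[OF wc]) auto
  define h where "h z = V z * (\<phi> z + 1)" for z
  have hc: "continuous_on UNIV h" unfolding h_def by (intro continuous_intros Vc \<phi>c)
  have hint: "h integrable_on UNIV" by (rule cont_supp_int[OF hc, of R]) (simp add: h_def VR)
  have V\<phi>int: "(\<lambda>z. V z * \<phi> z) integrable_on UNIV"
    by (rule cont_supp_int[of _ R]) (auto intro!: continuous_intros Vc \<phi>c simp: VR)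
  have Vint: "V integrable_on UNIV" by (rule cont_supp_int[OF Vc VR])
  define a where "a = integral UNIV (\<lambda>z. V z * \<phi> z)"
  have ha: "integral UNIV h = a + 1"
  proof -
    have "h = (\<lambda>z. V z * \<phi> z + V z)" unfolding h_def by (auto simp: algebra_simps)
    then show ?thesis unfolding a_def using integral_add[OF V\<phi>int Vint] V1 by simp
  qed
  define c where "c = - t * (a + 1)"
  define E where "E x = integral UNIV (\<lambda>z. ln (norm (x - z)) * h z)" for x
  have px: "(\<lambda>z. ln (norm (x - z)) * h z) integrable_on UNIV \<and> \<phi> x = c + t * E x / L" for x
  proof -
    have hint2: "(\<lambda>z. V z * (w (e *\<^sub>R z) / (- ln e) + 1)) integrable_on UNIV"
      using hint unfolding h_def \<phi>_def L_def .
    have r: "(\<lambda>z. ln (norm (x - z)) * (V z * (w (e *\<^sub>R z) / (- ln e) + 1))) integrable_on UNIV \<and>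
     w (e *\<^sub>R x) / (- ln e) = - t * integral UNIV (\<lambda>z. V z * (w (e *\<^sub>R z) / (- ln e) + 1))
        + t * integral UNIV (\<lambda>z. ln (norm (x - z)) * (V z * (w (e *\<^sub>R z) / (- ln e) + 1))) / (- ln e)"
      using per_x[OF e VR hint2, where x=x and T=t] eq[rule_format, of "e *\<^sub>R x"] unfolding t_def by blast
    then show ?thesis unfolding E_def h_def \<phi>_def L_def[symmetric] c_def
      using ha unfolding h_def \<phi>_def by simp
  qed
  have hbd: "bdd_above ((\<lambda>z. \<bar>\<phi> z\<bar>) ` cball 0 R)"
  proof -
    have "continuous_on UNIV (\<lambda>z. \<bar>\<phi> z\<bar>)" by (intro continuous_intros \<phi>c)
    then have "continuous_on (cball 0 R) (\<lambda>z. \<bar>\<phi> z\<bar>)" by (rule continuous_on_subset) simp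
    then have "compact ((\<lambda>z. \<bar>\<phi> z\<bar>) ` cball 0 R)"
      by (intro compact_continuous_image compact_cball)
    then show ?thesis by (rule bounded_imp_bdd_above[OF compact_imp_bounded])
  qed
  define M where "M = Sup ((\<lambda>z. \<bar>\<phi> z\<bar>) ` cball 0 R)"
  have hM: "\<bar>\<phi> z\<bar> \<le> M" if "z \<in> cball 0 R" for z
    unfolding M_def using hbd that by (intro cSup_upper) auto
  have M0: "M \<ge> 0" using hM[of 0] R by simp
  define \<delta> where "\<delta> = \<beta> * (M + 1) / L"
  have \<delta>0: "\<delta> \<ge> 0" unfolding \<delta>_def using \<beta>0 M0 L by simp
  have close: "\<bar>\<phi> x - c\<bar> \<le> \<delta>" if "norm x \<le> K" for x
  proof -
    have "\<bar>E x\<bar> \<le> (Vm * (M + 1)) * C0 K R"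
      unfolding E_def
    proof (rule bound_log_int[OF that])
      show "0 \<le> Vm * (M + 1)" using Vm0 M0 by simp
      show "\<And>z. z \<notin> cball 0 R \<Longrightarrow> h z = 0" unfolding h_def using VR by simp
      show "(\<lambda>z. ln (norm (x - z)) * h z) integrable_on UNIV" using px by blast
      fix z :: "real^2" assume z: "z \<in> cball 0 R"
      have "\<bar>\<phi> z + 1\<bar> \<le> M + 1" using hM[OF z] by linarith
      then have "\<bar>V z\<bar> * \<bar>\<phi> z + 1\<bar> \<le> Vm * (M + 1)"
        using Vm[of z] Vnn[of z] by (intro mult_mono) auto
      then show "\<bar>h z\<bar> \<le> Vm * (M + 1)" unfolding h_def by (simp add: abs_mult)
    qed
    then have "t * \<bar>E x\<bar> / L \<le> t * ((Vm * (M + 1)) * C0 K R) / L"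
      using t L by (intro divide_right_mono mult_left_mono) auto
    moreover have "\<phi> x - c = t * E x / L" using px[of x] by simp
    ultimately show ?thesis unfolding \<delta>_def \<beta>_def using t L
      by (simp add: abs_mult abs_divide mult_ac)
  qed
  have ac: "\<bar>a - c\<bar> \<le> \<delta>"
  proof -
    have i1: "(\<lambda>z. V z * (\<phi> z - c)) integrable_on UNIV"
      by (rule cont_supp_int[of _ R]) (auto intro!: continuous_intros Vc \<phi>c simp: VR)
    have i2: "(\<lambda>z. V z * \<delta>) integrable_on UNIV"
      by (rule cont_supp_int[of _ R]) (auto intro!: continuous_intros Vc simp: VR)
    have "integral UNIV (\<lambda>z. V z * (\<phi> z - c)) = a - c"
    proof -
      have "(\<lambda>z. V z * (\<phi> z - c)) = (\<lambda>z. V z * \<phi> z - c * V z)" by (auto simp: algebra_simps)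
      then show ?thesis unfolding a_def using integral_diff[OF V\<phi>int integrable_on_cmult_left[OF Vint, of c]] V1
        by simp
    qed
    moreover have "norm (integral UNIV (\<lambda>z. V z * (\<phi> z - c))) \<le> integral UNIV (\<lambda>z. V z * \<delta>)"
    proof (rule integral_norm_bound_integral[OF i1 i2])
      fix z :: "real^2"
      show "norm (V z * (\<phi> z - c)) \<le> V z * \<delta>"
      proof (cases "z \<in> cball 0 R")
        case True
        then have "norm z \<le> K" using K by simp
        then have "\<bar>\<phi> z - c\<bar> \<le> \<delta>" by (rule close)
        then show ?thesis using Vnn[of z] by (simp add: abs_mult mult_left_mono)
      next
        case False then show ?thesis using VR by simp
      qed
    qed
    moreover have "integral UNIV (\<lambda>z. V z * \<delta>) = \<delta>" using V1 by simp
    ultimately show ?thesis using V1 by simp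
  qed
  define r where "r = a - c"
  have cr: "c * (1 + t) = - t * (1 + r)" unfolding r_def c_def by (simp add: algebra_simps)
  have cA: "\<bar>c + t / (1 + t)\<bar> \<le> \<delta>"
  proof -
    have "c + t / (1 + t) = (c * (1 + t) + t) / (1 + t)" using t by (simp add: field_simps)
    also have "\<dots> = - t * r / (1 + t)" unfolding cr by (simp add: algebra_simps)
    finally have "c + t / (1 + t) = - t * r / (1 + t)" .
    then have "\<bar>c + t / (1 + t)\<bar> = (t / (1 + t)) * \<bar>r\<bar>" using t by (simp add: abs_mult)
    also have "\<dots> \<le> 1 * \<bar>r\<bar>" using t by (intro mult_right_mono) auto
    finally show ?thesis using ac unfolding r_def by simp
  qed
  have tle: "t / (1 + t) \<le> t" using t by (simp add: field_simps)
  have Mle: "M \<le> t + 2 * \<delta>"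
    unfolding M_def
  proof (rule cSup_least)
    show "(\<lambda>z. \<bar>\<phi> z\<bar>) ` cball 0 R \<noteq> {}" using R by auto
    fix y assume "y \<in> (\<lambda>z. \<bar>\<phi> z\<bar>) ` cball 0 R"
    then obtain z where z: "z \<in> cball 0 R" "y = \<bar>\<phi> z\<bar>" by auto
    then have "norm z \<le> K" using K by simp
    then have "\<bar>\<phi> z - c\<bar> \<le> \<delta>" by (rule close)
    moreover have "0 \<le> t / (1 + t)" using t by simp
    ultimately show "y \<le> t + 2 * \<delta>" using z(2) cA tle by linarith
  qed
  have "2 * \<beta> * (M + 1) \<le> (L / 2) * (M + 1)" using LB M0 by (intro mult_right_mono) auto
  then have "4 * \<delta> \<le> M + 1" unfolding \<delta>_def using L by (simp add: field_simps)
  then have M2: "M + 1 \<le> 2 * (t + 1)" using Mle by (smt (verit))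
  have "\<delta> \<le> \<beta> * (2 * (t + 1)) / L" unfolding \<delta>_def using L \<beta>0
    by (intro divide_right_mono mult_left_mono M2) auto
  moreover have "4 * \<beta> * (t + 1) / L = 2 * (\<beta> * (2 * (t + 1)) / L)" by simp
  ultimately have fin: "2 * \<delta> \<le> 4 * \<beta> * (t + 1) / L" by linarith
  show ?thesis
  proof
    fix x :: "real^2" assume "x \<in> cball 0 K"
    then have "\<bar>\<phi> x - c\<bar> \<le> \<delta>" by (intro close) simp
    then have "\<bar>\<phi> x + t / (1 + t)\<bar> \<le> 4 * \<beta> * (t + 1) / L" using cA fin by linarith
    moreover have "w (e *\<^sub>R x) * \<bar>ln e\<bar> powr (-1) = \<phi> x" unfolding absL \<phi>_def by simp
    ultimately show "\<bar>w (e *\<^sub>R x) * \<bar>ln e\<bar> powr (-1) + \<tau> / (2 * pi + \<tau>)\<bar>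
            \<le> 4 * (\<tau> / (2 * pi) * Vm * C0 K R) * (\<tau> / (2 * pi) + 1) / (- ln e)"
      unfolding tt \<beta>_def t_def L_def by simp
  qed
qed



lemma holder_cont:
  assumes "holder_continuous V" shows "continuous_on UNIV V"
proof -
  obtain \<alpha> C where a: "0 < \<alpha>" and H: "\<forall>x y. \<bar>V x - V y\<bar> \<le> C * dist x y powr \<alpha>"
    using assms unfolding holder_continuous_def by blast
  have "isCont V x" for x
  proof -
    have d: "((\<lambda>y. dist y x) \<longlongrightarrow> 0) (at x)"
      using tendsto_dist[OF tendsto_ident_at tendsto_const, of x x] by simp
    have "((\<lambda>y. dist y x powr \<alpha>) \<longlongrightarrow> 0) (at x)"
      by (rule tendsto_zero_powrI[OF d tendsto_const]) (use a in auto)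
    then have g: "((\<lambda>y. C * dist y x powr \<alpha>) \<longlongrightarrow> 0) (at x)"
      by (rule tendsto_mult_right_zero)
    have "((\<lambda>y. V y - V x) \<longlongrightarrow> 0) (at x)"
      by (rule Lim_null_comparison[OF _ g]) (use H in auto)
    then show ?thesis unfolding isCont_def by (rule LIM_zero_cancel)
  qed
  then show ?thesis by (intro continuous_at_imp_continuous_on) auto
qed

lemma C2_cont: "C2_plane f \<Longrightarrow> continuous_on UNIV f"
proof -
  assume "C2_plane f"
  then obtain f1 :: "real^2 \<Rightarrow> ((real^2) \<Rightarrow>\<^sub>L real)" where
    d: "\<forall>x. (f has_derivative blinfun_apply (f1 x)) (at x)"
    unfolding C2_plane_def by blast
  show ?thesis
    by (rule continuous_at_imp_continuous_on) (use d has_derivative_continuous in blast)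
qed

theorem theorem3p2:
  fixes V :: "real^2 \<Rightarrow> real" and \<tau> :: real
    and u :: "real \<Rightarrow> real^2 \<Rightarrow> real"
  assumes V_nonneg: "\<forall>x. V x \<ge> 0"
    and V_holder: "holder_continuous V"
    and V_supp: "has_compact_support V"
    and V_int: "V integrable_on UNIV" and V_mass: "integral UNIV V = 1"
    and tau_pos: "\<tau> > 0"
    and u_sol: "\<exists>\<epsilon>0>0. \<forall>\<epsilon>. 0 < \<epsilon> \<and> \<epsilon> < \<epsilon>0 \<longrightarrow>
        C2_plane (u \<epsilon>) \<and> log_growth (u \<epsilon>) \<and>
        (\<forall>x. (\<lambda>y. ln (norm (x - y)) *
               ((\<epsilon> powr (-2) * \<bar>ln \<epsilon>\<bar> powr (-1) * V (y /\<^sub>R \<epsilon>)) * u \<epsilon> y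
                 + \<epsilon> powr (-2) * V (y /\<^sub>R \<epsilon>))) integrable_on UNIV \<and>
             u \<epsilon> x = \<tau> / (2 * pi) *
               integral UNIV (\<lambda>y. ln (norm (x - y)) *
                 ((\<epsilon> powr (-2) * \<bar>ln \<epsilon>\<bar> powr (-1) * V (y /\<^sub>R \<epsilon>)) * u \<epsilon> y
                   + \<epsilon> powr (-2) * V (y /\<^sub>R \<epsilon>))))"
  shows "\<forall>k>0. ((\<lambda>\<epsilon>. SUP x\<in>cball 0 k.
             \<bar>u \<epsilon> (\<epsilon> *\<^sub>R x) * \<bar>ln \<epsilon>\<bar> powr (-1) + \<tau> / (2 * pi + \<tau>)\<bar>)
           \<longlongrightarrow> 0) (at_right 0)"
proof (intro allI impI)
  fix k :: real assume k: "k > 0"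
  have Vc: "continuous_on UNIV V" by (rule holder_cont[OF V_holder])
  have "bounded (closure {x. V x \<noteq> 0})"
    using V_supp unfolding has_compact_support_def by (rule compact_imp_bounded)
  then obtain R0 where R0: "\<forall>z\<in>closure {x. V x \<noteq> 0}. norm z \<le> R0"
    unfolding bounded_iff by blast
  define R where "R = max R0 0"
  have R: "R \<ge> 0" unfolding R_def by simp
  have VR: "V z = 0" if "z \<notin> cball 0 R" for z
  proof (rule ccontr)
    assume "V z \<noteq> 0"
    then have "z \<in> {x. V x \<noteq> 0}" by simp
    then have "z \<in> closure {x. V x \<noteq> 0}" by (rule subsetD[OF closure_subset])
    then have "norm z \<le> R0" using R0 by (rule bspec[rotated])
    then have "norm z \<le> R" unfolding R_def by linarith
    then show False using that by simp
  qed
  have "compact (V ` cball 0 R)"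
    by (intro compact_continuous_image compact_cball continuous_on_subset[OF Vc]) simp
  then have "bounded (V ` cball 0 R)" by (rule compact_imp_bounded)
  then obtain Vm where Vm0: "\<forall>y\<in>V ` cball 0 R. norm y \<le> Vm"
    unfolding bounded_iff by blast
  have Vm: "V z \<le> max Vm 0" for z
  proof (cases "z \<in> cball 0 R")
    case True
    then have "norm (V z) \<le> Vm" using Vm0 by blast
    then show ?thesis by simp
  next
    case False then show ?thesis using VR by simp
  qed
  obtain \<epsilon>0 where e0: "\<epsilon>0 > 0" and sol: "\<forall>\<epsilon>. 0 < \<epsilon> \<and> \<epsilon> < \<epsilon>0 \<longrightarrow>
        C2_plane (u \<epsilon>) \<and> log_growth (u \<epsilon>) \<and>
        (\<forall>x. (\<lambda>y. ln (norm (x - y)) *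
               ((\<epsilon> powr (-2) * \<bar>ln \<epsilon>\<bar> powr (-1) * V (y /\<^sub>R \<epsilon>)) * u \<epsilon> y
                 + \<epsilon> powr (-2) * V (y /\<^sub>R \<epsilon>))) integrable_on UNIV \<and>
             u \<epsilon> x = \<tau> / (2 * pi) *
               integral UNIV (\<lambda>y. ln (norm (x - y)) *
                 ((\<epsilon> powr (-2) * \<bar>ln \<epsilon>\<bar> powr (-1) * V (y /\<^sub>R \<epsilon>)) * u \<epsilon> y
                   + \<epsilon> powr (-2) * V (y /\<^sub>R \<epsilon>))))"
    using u_sol by blast
  define K where "K = max k R"
  have K: "R \<le> K" "k \<le> K" unfolding K_def by auto
  define \<beta> where "\<beta> = \<tau> / (2 * pi) * max Vm 0 * C0 K R"
  define B where "B \<epsilon> = 4 * \<beta> * (\<tau> / (2 * pi) + 1) / (- ln \<epsilon>)" for \<epsilon> :: real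
  define F where "F \<epsilon> = (SUP x\<in>cball 0 k.
             \<bar>u \<epsilon> (\<epsilon> *\<^sub>R x) * \<bar>ln \<epsilon>\<bar> powr (-1) + \<tau> / (2 * pi + \<tau>)\<bar>)" for \<epsilon> :: real
  define b where "b = min \<epsilon>0 (min 1 (exp (- (4 * \<beta> + 1))))"
  have b: "b > 0" unfolding b_def using e0 by simp
  have main: "0 \<le> F \<epsilon> \<and> F \<epsilon> \<le> B \<epsilon>" if e: "0 < \<epsilon>" "\<epsilon> < b" for \<epsilon>
  proof -
    have bb: "b \<le> \<epsilon>0" "b \<le> 1" "b \<le> exp (- (4 * \<beta> + 1))"
      unfolding b_def by (rule min.cobounded1, rule order.trans[OF min.cobounded2 min.cobounded1],
          rule order.trans[OF min.cobounded2 min.cobounded2])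
    have e1: "\<epsilon> < 1" "\<epsilon> < \<epsilon>0" using e bb by linarith+
    have "\<epsilon> < exp (- (4 * \<beta> + 1))" using e bb by linarith
    then have "ln \<epsilon> < ln (exp (- (4 * \<beta> + 1)))" using e(1) by (subst ln_less_cancel_iff) auto
    then have "ln \<epsilon> < - (4 * \<beta> + 1)" by simp
    then have Lb: "- ln \<epsilon> \<ge> 4 * (\<tau> / (2 * pi) * max Vm 0 * C0 K R) + 1" unfolding \<beta>_def by simp
    have s: "C2_plane (u \<epsilon>)" and eq: "\<forall>x. (\<lambda>y. ln (norm (x - y)) *
               ((\<epsilon> powr (-2) * \<bar>ln \<epsilon>\<bar> powr (-1) * V (y /\<^sub>R \<epsilon>)) * u \<epsilon> y
                 + \<epsilon> powr (-2) * V (y /\<^sub>R \<epsilon>))) integrable_on UNIV \<and>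
             u \<epsilon> x = \<tau> / (2 * pi) *
               integral UNIV (\<lambda>y. ln (norm (x - y)) *
                 ((\<epsilon> powr (-2) * \<bar>ln \<epsilon>\<bar> powr (-1) * V (y /\<^sub>R \<epsilon>)) * u \<epsilon> y
                   + \<epsilon> powr (-2) * V (y /\<^sub>R \<epsilon>)))"
      using sol e(1) e1(2) by blast+
    have P: "\<forall>x\<in>cball 0 K. \<bar>u \<epsilon> (\<epsilon> *\<^sub>R x) * \<bar>ln \<epsilon>\<bar> powr (-1) + \<tau> / (2 * pi + \<tau>)\<bar> \<le> B \<epsilon>"
      using per_eps[OF e(1) e1(1) tau_pos Vc _ VR R Vm V_mass C2_cont[OF s] eq K(1) Lb] V_nonneg
      unfolding B_def \<beta>_def by blast
    have P': "\<forall>x\<in>cball 0 k. \<bar>u \<epsilon> (\<epsilon> *\<^sub>R x) * \<bar>ln \<epsilon>\<bar> powr (-1) + \<tau> / (2 * pi + \<tau>)\<bar> \<le> B \<epsilon>"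
      using P K(2) by auto
    have ne: "cball (0::real^2) k \<noteq> {}" using k by simp
    have le: "F \<epsilon> \<le> B \<epsilon>" unfolding F_def using P' ne by (intro cSUP_least) auto
    have bdd: "bdd_above ((\<lambda>x. \<bar>u \<epsilon> (\<epsilon> *\<^sub>R x) * \<bar>ln \<epsilon>\<bar> powr (-1) + \<tau> / (2 * pi + \<tau>)\<bar>) ` cball 0 k)"
      using P' by (intro bdd_aboveI2) auto
    have "\<bar>u \<epsilon> (\<epsilon> *\<^sub>R 0) * \<bar>ln \<epsilon>\<bar> powr (-1) + \<tau> / (2 * pi + \<tau>)\<bar> \<le> F \<epsilon>"
      unfolding F_def using k by (intro cSUP_upper[OF _ bdd]) auto
    then have "0 \<le> F \<epsilon>" by linarith
    with le show ?thesis by simp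
  qed
  have ev: "eventually (\<lambda>\<epsilon>. 0 < \<epsilon> \<and> \<epsilon> < b) (at_right (0::real))"
    unfolding eventually_at_right_field using b by blast
  have lim: "(B \<longlongrightarrow> 0) (at_right 0)"
  proof -
    have "filterlim (\<lambda>\<epsilon>::real. - ln \<epsilon>) at_top (at_right 0)"
      using ln_at_0 filterlim_uminus_at_top by (simp add: filterlim_uminus_at_bot)
    then have "filterlim (\<lambda>\<epsilon>::real. - ln \<epsilon>) at_infinity (at_right 0)"
      by (rule filterlim_at_top_imp_at_infinity)
    then show ?thesis unfolding B_def by (rule tendsto_divide_0[OF tendsto_const])
  qed
  have "(F \<longlongrightarrow> 0) (at_right 0)"
  proof (rule tendsto_sandwich[OF _ _ tendsto_const lim])
    show "eventually (\<lambda>\<epsilon>. 0 \<le> F \<epsilon>) (at_right 0)" using ev by (rule eventually_mono) (use main in blast)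
    show "eventually (\<lambda>\<epsilon>. F \<epsilon> \<le> B \<epsilon>) (at_right 0)" using ev by (rule eventually_mono) (use main in blast)
  qed
  then show "((\<lambda>\<epsilon>. SUP x\<in>cball 0 k.
             \<bar>u \<epsilon> (\<epsilon> *\<^sub>R x) * \<bar>ln \<epsilon>\<bar> powr (-1) + \<tau> / (2 * pi + \<tau>)\<bar>) \<longlongrightarrow> 0) (at_right 0)"
    unfolding F_def .
qed


end
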